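(* Let $\Gamma=(\mathcal{V},\mathcal{H})$ be an oriented hypergraph with normalized Laplacian $L$. If $\Gamma$ has $\hat{n}$ vertices that are pairwise twins, then $0$ is an eigenvalue of $L$ with multiplicity at least $\hat{n}-1$. Furthermore, if $v_i$ and $v_j$ are twin vertices and $f:\mathcal{V}\to\mathbb{R}$ is an eigenfunction of $L$ with eigenvalue $\lambda\neq 0$, then $f(v_i)=f(v_j)$.
   Context: An oriented hypergraph is a pair $\Gamma=(\mathcal{V},\mathcal{H})$ where $\mathcal{V}=\{v_1,\ldots,v_N\}$ is a finite set and each hyperedge $h$ is a pair $(h_{in},h_{out})$ of disjoint nonempty subsets of $\mathcal{V}$; standing assumption: no isolated vertices. Vertices are co-oriented in $h$ if they lie in the same one of $h_{in},h_{out}$, anti-oriented if in different ones. $\deg(v)$ is the number of hyperedges containing $v$, $D$ the diagonal degree matrix; the adjacency matrix has $A_{ii}=0$ and $A_{ij}=\#\{h: v_i,v_j\text{ anti-oriented in }h\}-\#\{h:v_i,v_j\text{ co-oriented in }h\}$ for $i\ne j$; $L=\mathrm{Id}-D^{-1}A$, acting on functions $f:\mathcal{V}\to\mathbb{R}$ by $Lf(v_i)=f(v_i)-\frac{1}{\deg v_i}\sum_{j} A_{ij}f(v_j)$. Two vertices are twins if they belong to exactly the same hyperedges and, in each such hyperedge, are co-oriented (so $A_{ij}=-\deg v_i=-\deg v_j$ and $A_{ik}=A_{jk}$ for $k\ne i,j$). *)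

theory Defs
  imports "Jordan_Normal_Form.Char_Poly"
begin

text \<open>Vertices are v_1..v_N, represented as 0..<N. A hyperedge is a pair (h_in, h_out).\<close>

type_synonym hyperedge = "nat set \<times> nat set"

definition vert_in :: "nat \<Rightarrow> hyperedge \<Rightarrow> bool" where
  "vert_in v h = (v \<in> fst h \<or> v \<in> snd h)"

definition oriented_hypergraph :: "nat \<Rightarrow> hyperedge set \<Rightarrow> bool" where
  "oriented_hypergraph N H =
     (finite H \<and>
      (\<forall>h\<in>H. fst h \<noteq> {} \<and> snd h \<noteq> {} \<and> fst h \<inter> snd h = {} \<and>
              fst h \<subseteq> {0..<N} \<and> snd h \<subseteq> {0..<N}) \<and>
      (\<forall>v<N. \<exists>h\<in>H. vert_in v h))"

definition co_oriented :: "nat \<Rightarrow> nat \<Rightarrow> hyperedge \<Rightarrow> bool" where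
  "co_oriented i j h = ((i \<in> fst h \<and> j \<in> fst h) \<or> (i \<in> snd h \<and> j \<in> snd h))"

definition anti_oriented :: "nat \<Rightarrow> nat \<Rightarrow> hyperedge \<Rightarrow> bool" where
  "anti_oriented i j h = ((i \<in> fst h \<and> j \<in> snd h) \<or> (i \<in> snd h \<and> j \<in> fst h))"

definition hdeg :: "hyperedge set \<Rightarrow> nat \<Rightarrow> nat" where
  "hdeg H v = card {h\<in>H. vert_in v h}"

definition hadj :: "hyperedge set \<Rightarrow> nat \<Rightarrow> nat \<Rightarrow> real" where
  "hadj H i j = (if i = j then 0 else
      real (card {h\<in>H. anti_oriented i j h}) - real (card {h\<in>H. co_oriented i j h}))"

definition hlaplacian :: "nat \<Rightarrow> hyperedge set \<Rightarrow> real mat" where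
  "hlaplacian N H = mat N N (\<lambda>(i,j). (if i = j then 1 else 0) - hadj H i j / real (hdeg H i))"

definition twins :: "hyperedge set \<Rightarrow> nat \<Rightarrow> nat \<Rightarrow> bool" where
  "twins H i j = (i \<noteq> j \<and> (\<forall>h\<in>H. vert_in i h \<longleftrightarrow> vert_in j h) \<and>
                  (\<forall>h\<in>H. vert_in i h \<longrightarrow> co_oriented i j h))"

end

theory Submission imports Defs begin

lemma twin_basic:
  assumes G: "oriented_hypergraph N H" and tw: "twins H i j" and h: "h \<in> H"
  shows "vert_in i h = vert_in j h"
    and "anti_oriented i k h = anti_oriented j k h"
    and "co_oriented i k h = co_oriented j k h"
    and "anti_oriented k i h = anti_oriented k j h"
    and "co_oriented k i h = co_oriented k j h"
    and "\<not> anti_oriented i j h"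
    and "co_oriented i j h = vert_in i h"
proof -
  have d: "fst h \<inter> snd h = {}" using G h unfolding oriented_hypergraph_def by auto
  have a: "vert_in i h = vert_in j h" and b: "vert_in i h \<longrightarrow> co_oriented i j h"
    using tw h unfolding twins_def by auto
  show "vert_in i h = vert_in j h" by (rule a)
  show "anti_oriented i k h = anti_oriented j k h" "co_oriented i k h = co_oriented j k h"
    "anti_oriented k i h = anti_oriented k j h" "co_oriented k i h = co_oriented k j h"
    "\<not> anti_oriented i j h" "co_oriented i j h = vert_in i h"
    using a b d unfolding vert_in_def co_oriented_def anti_oriented_def by blast+
qed

lemma twin_hadj:
  assumes G: "oriented_hypergraph N H" and tw: "twins H i j" and k: "k \<noteq> i" "k \<noteq> j"
  shows "hadj H i k = hadj H j k" "hadj H k i = hadj H k j"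
    "hadj H i j = - real (hdeg H i)" "hadj H j i = - real (hdeg H i)" "hdeg H i = hdeg H j"
proof -
  have ij: "i \<noteq> j" using tw unfolding twins_def by auto
  note tb = twin_basic[OF G tw]
  have e1: "{h\<in>H. anti_oriented i k h} = {h\<in>H. anti_oriented j k h}"
    using tb(2)[of _ k] by blast
  have e2: "{h\<in>H. co_oriented i k h} = {h\<in>H. co_oriented j k h}"
    using tb(3)[of _ k] by blast
  have e3: "{h\<in>H. anti_oriented k i h} = {h\<in>H. anti_oriented k j h}"
    using tb(4)[of _ k] by blast
  have e4: "{h\<in>H. co_oriented k i h} = {h\<in>H. co_oriented k j h}"
    using tb(5)[of _ k] by blast
  have e5: "{h\<in>H. anti_oriented i j h} = {}"
    using tb(6) by blast
  have e6: "{h\<in>H. anti_oriented j i h} = {}"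
    using tb(6) unfolding anti_oriented_def by blast
  have e7: "{h\<in>H. co_oriented i j h} = {h\<in>H. vert_in i h}"
    using tb(7) by blast
  have e8: "{h\<in>H. co_oriented j i h} = {h\<in>H. vert_in i h}"
    using tb(7) unfolding co_oriented_def by blast
  have e9: "{h\<in>H. vert_in i h} = {h\<in>H. vert_in j h}"
    using tb(1) by blast
  show "hadj H i k = hadj H j k" using k ij unfolding hadj_def e1 e2 by simp
  show "hadj H k i = hadj H k j" using k ij unfolding hadj_def e3 e4 by simp
  show "hadj H i j = - real (hdeg H i)" using ij unfolding hadj_def hdeg_def e5 e7 by simp
  show "hadj H j i = - real (hdeg H i)" using ij unfolding hadj_def hdeg_def e6 e8 by simp
  show "hdeg H i = hdeg H j" unfolding hdeg_def e9 ..
qed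

lemma hadj_self[simp]: "hadj H k k = 0" unfolding hadj_def by simp

lemma hdeg_pos:
  assumes G: "oriented_hypergraph N H" and i: "i < N"
  shows "hdeg H i > 0"
proof -
  have f: "finite H" and ex: "\<exists>h\<in>H. vert_in i h" using G i unfolding oriented_hypergraph_def by auto
  then show ?thesis unfolding hdeg_def by (auto simp: card_gt_0_iff)
qed

lemma L_carrier: "hlaplacian N H \<in> carrier_mat N N"
  unfolding hlaplacian_def by auto

lemma L_idx: "i < N \<Longrightarrow> j < N \<Longrightarrow> hlaplacian N H $$ (i,j) =
   (if i = j then 1 else 0) - hadj H i j / real (hdeg H i)"
  unfolding hlaplacian_def by auto

lemma twin_L:
  assumes G: "oriented_hypergraph N H" and tw: "twins H i j" and i: "i < N" and j: "j < N"
    and k: "k < N"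
  shows "hlaplacian N H $$ (i,k) = hlaplacian N H $$ (j,k)"
    "hlaplacian N H $$ (k,i) = hlaplacian N H $$ (k,j)"
proof -
  have ij: "i \<noteq> j" using tw unfolding twins_def by auto
  have p: "hdeg H i > 0" "hdeg H j > 0" using hdeg_pos G i j by auto
  note th = twin_hadj[OF G tw]
  have hd: "hdeg H i = hdeg H j" using th(5)[of "Suc (i+j)"] by simp
  show "hlaplacian N H $$ (i,k) = hlaplacian N H $$ (j,k)"
    "hlaplacian N H $$ (k,i) = hlaplacian N H $$ (k,j)"
    using ij p hd th[of k] th(3,4)[of "Suc (i+j)"] by (auto simp: L_idx i j k)
qed


lemma det_rows_dvd:
  fixes C :: "'a::comm_ring_1 poly mat"
  assumes C: "C \<in> carrier_mat n n" and s0: "s0 < n"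
    and T: "T \<subseteq> {0..<n} - {s0}"
    and rows: "\<And>t l. t \<in> T \<Longrightarrow> l < n \<Longrightarrow>
       C $$ (t,l) = C $$ (s0,l) + [:0,1:] * (if l = t then 1 else if l = s0 then -1 else 0)"
  shows "[:0,1:] ^ card T dvd det C"
proof -
  define B where "B = (\<lambda>U. mat n n (\<lambda>(k,l). if k \<in> U then
        (if l = k then 1 else if l = s0 then -1 else 0) else C $$ (k,l)) :: 'a poly mat)"
  have BC: "B U \<in> carrier_mat n n" for U unfolding B_def by auto
  have "finite T" using T finite_subset by blast
  have main: "finite U \<Longrightarrow> U \<subseteq> T \<Longrightarrow> det C = [:0,1:] ^ card U * det (B U)" for U
  proof -
    assume "finite U" "U \<subseteq> T"
    then show ?thesis
    proof (induction U rule: finite_induct)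
      case empty
      have "B {} = C" unfolding B_def using C by (intro eq_matI) auto
      then show ?case by simp
    next
      case (insert t U)
      have t: "t < n" "t \<noteq> s0" "t \<in> T" using insert T by auto
      have s0U: "s0 \<notin> U" using insert T by auto
      have eq: "addrow (-1) t s0 (B U) = multrow t [:0,1:] (B (insert t U))"
        unfolding mat_addrow_def mat_multrow_def
        apply (rule eq_matI)
        using t s0U insert(2) rows[OF t(3)] BC s0 by (auto simp: B_def)
      have "det (B U) = det (addrow (-1) t s0 (B U))"
        using det_addrow[OF s0 t(2) BC] by simp
      also have "\<dots> = [:0,1:] * det (B (insert t U))"
        unfolding eq by (rule det_multrow[OF t(1) BC])
      finally show ?case using insert by simp
    qed
  qed
  show ?thesis using main[OF \<open>finite T\<close>] by simp
qed

theorem mainTheorem4: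
  fixes N :: nat and H :: "hyperedge set"
  assumes "oriented_hypergraph N H"
  shows "(\<forall>S. S \<subseteq> {0..<N} \<longrightarrow> card S \<ge> 2 \<longrightarrow>
            (\<forall>i\<in>S. \<forall>j\<in>S. i \<noteq> j \<longrightarrow> twins H i j) \<longrightarrow>
            eigenvalue (hlaplacian N H) 0 \<and>
            card S - 1 \<le> order 0 (char_poly (hlaplacian N H)))
       \<and> (\<forall>i j f lam. i < N \<longrightarrow> j < N \<longrightarrow> twins H i j \<longrightarrow>
            eigenvector (hlaplacian N H) f lam \<longrightarrow> lam \<noteq> 0 \<longrightarrow> f $ i = f $ j)"
proof (intro conjI allI impI)
  let ?L = "hlaplacian N H"
  have LC: "?L \<in> carrier_mat N N" by (rule L_carrier)
  note G = assms
  {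
    fix i j f and lam :: real
    assume i: "i < N" and j: "j < N" and tw: "twins H i j"
      and ev: "eigenvector ?L f lam" and lam: "lam \<noteq> 0"
    have f: "f \<in> carrier_vec N" and Lf: "?L *\<^sub>v f = lam \<cdot>\<^sub>v f"
      using ev LC unfolding eigenvector_def by auto
    have rows: "row ?L i = row ?L j"
      by (rule eq_vecI) (use twin_L[OF G tw i j] LC i j in auto)
    have "lam * f $ i = (?L *\<^sub>v f) $ i" using Lf f i by simp
    also have "\<dots> = row ?L i \<bullet> f" using LC i by simp
    also have "\<dots> = (?L *\<^sub>v f) $ j" using LC j rows by simp
    also have "\<dots> = lam * f $ j" using Lf f j by simp
    finally show "f $ i = f $ j" using lam by simp
  }
  fix S
  assume S: "S \<subseteq> {0..<N}" and cS: "2 \<le> card S"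
    and tw: "\<forall>i\<in>S. \<forall>j\<in>S. i \<noteq> j \<longrightarrow> twins H i j"
  have fS: "finite S" using S finite_subset by blast
  have "S \<noteq> {}" using cS by auto
  then obtain s0 where s0: "s0 \<in> S" by auto
  have "card (S - {s0}) \<noteq> 0" using cS s0 fS by auto
  then obtain t0 where t0: "t0 \<in> S" "t0 \<noteq> s0" by (metis card.empty Diff_iff all_not_in_conv insertI1)
  have s0N: "s0 < N" and t0N: "t0 < N" using S s0 t0 by auto
  have tw0: "twins H t0 s0" using tw s0 t0 by auto
  show "eigenvalue ?L 0"
    unfolding eigenvalue_def eigenvector_def
  proof (intro exI conjI)
    let ?v = "unit_vec N t0 - unit_vec N s0 :: real vec"
    show "?v \<in> carrier_vec (dim_row ?L)" using LC by simp
    have v1: "?v $ t0 = 1" using t0 t0N s0N by simp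
    show "?v \<noteq> 0\<^sub>v (dim_row ?L)"
    proof
      assume "?v = 0\<^sub>v (dim_row ?L)"
      then have "?v $ t0 = 0" using t0N LC by simp
      then show False using v1 by simp
    qed
    show "?L *\<^sub>v ?v = 0 \<cdot>\<^sub>v ?v"
    proof (rule eq_vecI)
      fix k assume "k < dim_vec (0 \<cdot>\<^sub>v ?v)"
      then have k: "k < N" by simp
      have "(?L *\<^sub>v ?v) $ k = row ?L k \<bullet> ?v" using LC k by simp
      also have "\<dots> = row ?L k \<bullet> unit_vec N t0 - row ?L k \<bullet> unit_vec N s0"
        by (rule scalar_prod_minus_distrib[where n=N]) (use LC k in auto)
      also have "\<dots> = 0" using twin_L(2)[OF G tw0 t0N s0N k] LC k t0N s0N by simp
      finally show "(?L *\<^sub>v ?v) $ k = (0 \<cdot>\<^sub>v ?v) $ k" using k by simp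
    qed (use LC in simp)
  qed
  define C where "C = char_poly_matrix ?L"
  have CC: "C \<in> carrier_mat N N" unfolding C_def using LC by simp
  have Cidx: "C $$ (k,l) = (if k = l then [:0,1:] else 0) + [:- ?L $$ (k,l):]" if "k < N" "l < N" for k l
    unfolding C_def char_poly_matrix_def using that LC by auto
  have "[:0,1:] ^ card (S - {s0}) dvd det C"
  proof (rule det_rows_dvd[OF CC s0N])
    show "S - {s0} \<subseteq> {0..<N} - {s0}" using S by auto
    fix t l assume t: "t \<in> S - {s0}" and l: "l < N"
    have tN: "t < N" using t S by auto
    have twt: "twins H t s0" using tw t s0 by auto
    have e: "?L $$ (t,l) = ?L $$ (s0,l)" using twin_L(1)[OF G twt tN s0N l] .
    show "C $$ (t,l) = C $$ (s0,l) + [:0,1:] * (if l = t then 1 else if l = s0 then -1 else 0)"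
      using t l tN s0N by (auto simp: Cidx e)
  qed
  then have dv: "[:- 0,1:] ^ card (S - {s0}) dvd char_poly ?L" unfolding C_def char_poly_def by simp
  have "char_poly ?L \<noteq> 0" using degree_monic_char_poly[OF LC] by auto
  then have "card (S - {s0}) \<le> order 0 (char_poly ?L)" using dv order_divides by blast
  then show "card S - 1 \<le> order 0 (char_poly ?L)" using s0 fS by simp
qed

end
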